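(* Let $D\subset\mathbb{R}^{n+1}$ be a domain with upper base $\gamma(D)$, and let $F:D\times\mathbb{R}\times\mathbb{R}^n\times\mathcal{S}_n\to\mathbb{R}$ satisfy the structure condition (S) below with constants $0<\lambda\le\Lambda$ and bounded continuous functions $b\ge 0$, $c\le 0$ on $D$, together with $F(x,t,0,0,0)=0$ on $D$. Let $u$ be a continuous viscosity subsolution (resp. supersolution) of $$F(x,t,u,Du,D^2u)-\partial_t u=0$$ in $D\cup\gamma(D)$, and suppose $u$ attains a nonnegative maximum (resp. nonpositive minimum) $M$ over $D\cup\gamma(D)$ at some point $(x_0,t_0)\in D\cup\gamma(D)$. Then $u\equiv M$ in the subdomain of $D$ subordinate to $(x_0,t_0)$, i.e. $u(x',t')=M$ at every point $(x',t')\in D$ which can be joined to $(x_0,t_0)$ by a broken line lying in $D\cup\gamma(D)$ (except possibly at $(x_0,t_0)$), uniquely projected onto the $t$-axis, and having $(x_0,t_0)$ as its upper end-point.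
   Context: $\mathcal{S}_n$ denotes the space of real symmetric $n\times n$ matrices; for $N\ge 0$, $\|N\|=\mathrm{Tr}(N)$. Structure condition (S): for all $(x,t)\in D$, $r,s\in\mathbb{R}$, $p,q\in\mathbb{R}^n$, $M,N\in\mathcal{S}_n$ with $N\ge 0$, $$\lambda\|N\|-b(x,t)|p-q|+c(x,t)(r-s)\le F(x,t,r,p,M+N)-F(x,t,s,q,M)\le \Lambda\|N\|+b(x,t)|p-q|+c(x,t)(r-s).$$ (Consequently, viscosity subsolutions satisfy $\mathcal{M}^+_{\lambda,\Lambda}(D^2u)+b|Du|+cu-\partial_tu\ge0$ and supersolutions satisfy $\mathcal{M}^-_{\lambda,\Lambda}(D^2u)-b|Du|+cu-\partial_tu\le0$ in the viscosity sense, where $\mathcal{M}^+_{\lambda,\Lambda}(X)=\sup_{\lambda I\le A\le\Lambda I}\mathrm{Tr}(AX)$, $\mathcal{M}^-_{\lambda,\Lambda}(X)=\inf_{\lambda I\le A\le\Lambda I}\mathrm{Tr}(AX)$.) Cylinders: $\mathbb{Q}^{t_1,t_2}_{x,R}=\{(y,s):|y-x|<R,\ t_1<s<t_2\}$. Upper base $\gamma(D)$: the set of points $(x,t)\in\partial D$ for which there is $h>0$ such that $\mathbb{Q}^{t-h,t}_{x,h}\subset D$ while $\mathbb{Q}^{t,t+h}_{x,h}$ lies outside $D$. Being a viscosity subsolution (supersolution) in $D\cup\gamma(D)$ means the viscosity inequalities hold also at points of $\gamma(D)$ (tested with functions touching from the past side, as usual for parabolic problems up to the terminal time). *)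

theory Defs
  imports "HOL-Analysis.Analysis"
begin

definition sym_mat :: "real^'n^'n \<Rightarrow> bool" where
  "sym_mat M \<longleftrightarrow> transpose M = M"

definition psd_mat :: "real^'n^'n \<Rightarrow> bool" where
  "psd_mat N \<longleftrightarrow> (\<forall>v. 0 \<le> v \<bullet> (N *v v))"

definition cyl :: "real^'n \<Rightarrow> real \<Rightarrow> real \<Rightarrow> real \<Rightarrow> ((real^'n) \<times> real) set" where
  "cyl x R t1 t2 = {(y,s). dist y x < R \<and> t1 < s \<and> s < t2}"

definition upper_base :: "((real^'n) \<times> real) set \<Rightarrow> ((real^'n) \<times> real) set" where
  "upper_base D = {(x,t) \<in> frontier D. \<exists>h>0. cyl x h (t - h) t \<subseteq> D \<and> cyl x h t (t + h) \<inter> D = {}}"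

definition struct_S ::
  "(real^'n \<Rightarrow> real \<Rightarrow> real \<Rightarrow> real^'n \<Rightarrow> real^'n^'n \<Rightarrow> real) \<Rightarrow> ((real^'n) \<times> real) set \<Rightarrow>
   real \<Rightarrow> real \<Rightarrow> (real^'n \<Rightarrow> real \<Rightarrow> real) \<Rightarrow> (real^'n \<Rightarrow> real \<Rightarrow> real) \<Rightarrow> bool" where
  "struct_S F E lam Lam b c \<longleftrightarrow>
     (\<forall>(x,t)\<in>E. \<forall>r s p q M N. sym_mat M \<and> sym_mat N \<and> psd_mat N \<longrightarrow>
        lam * trace N - b x t * norm (p - q) + c x t * (r - s) \<le> F x t r p (M + N) - F x t s q M \<and>
        F x t r p (M + N) - F x t s q M \<le> Lam * trace N + b x t * norm (p - q) + c x t * (r - s))"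

definition C21_on ::
  "((real^'n) \<times> real) set \<Rightarrow> (real^'n \<Rightarrow> real \<Rightarrow> real) \<Rightarrow> (real^'n \<Rightarrow> real \<Rightarrow> real^'n) \<Rightarrow>
   (real^'n \<Rightarrow> real \<Rightarrow> real^'n^'n) \<Rightarrow> (real^'n \<Rightarrow> real \<Rightarrow> real) \<Rightarrow> bool" where
  "C21_on U phi Dphi D2phi phit \<longleftrightarrow> open U \<and>
     (\<forall>(y,s)\<in>U. ((\<lambda>z. phi z s) has_derivative (\<lambda>h. Dphi y s \<bullet> h)) (at y) \<and>
                ((\<lambda>z. Dphi z s) has_derivative (\<lambda>h. D2phi y s *v h)) (at y) \<and>
                ((\<lambda>r. phi y r) has_real_derivative phit y s) (at s)) \<and>
     continuous_on U (\<lambda>(y,s). phi y s) \<and> continuous_on U (\<lambda>(y,s). Dphi y s) \<and>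
     continuous_on U (\<lambda>(y,s). D2phi y s) \<and> continuous_on U (\<lambda>(y,s). phit y s)"

text \<open>Test neighbourhood of (x0,t0) of size r relative to D: a full neighbourhood inside D if
  (x0,t0) is in D; only the past side (s \<le> t0) if (x0,t0) is a point of the upper base.\<close>
definition test_nbhd :: "((real^'n) \<times> real) set \<Rightarrow> real^'n \<Rightarrow> real \<Rightarrow> real \<Rightarrow> ((real^'n) \<times> real) set" where
  "test_nbhd D x0 t0 r =
     (if (x0,t0) \<in> D then {(y,s) \<in> D. dist y x0 < r \<and> \<bar>s - t0\<bar> < r}
      else insert (x0,t0) {(y,s) \<in> D. dist y x0 < r \<and> t0 - r < s \<and> s < t0})"

definition visc_sub ::
  "(real^'n \<Rightarrow> real \<Rightarrow> real \<Rightarrow> real^'n \<Rightarrow> real^'n^'n \<Rightarrow> real) \<Rightarrow> ((real^'n) \<times> real) set \<Rightarrow>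
   (real^'n \<Rightarrow> real \<Rightarrow> real) \<Rightarrow> bool" where
  "visc_sub F D u \<longleftrightarrow>
     (\<forall>x0 t0. (x0,t0) \<in> D \<union> upper_base D \<longrightarrow>
       (\<forall>U phi Dphi D2phi phit. (x0,t0) \<in> U \<and> C21_on U phi Dphi D2phi phit \<and>
          (\<exists>r>0. \<forall>(y,s)\<in>test_nbhd D x0 t0 r. u y s - phi y s \<le> u x0 t0 - phi x0 t0) \<longrightarrow>
          F x0 t0 (u x0 t0) (Dphi x0 t0) (D2phi x0 t0) - phit x0 t0 \<ge> 0))"

definition visc_super ::
  "(real^'n \<Rightarrow> real \<Rightarrow> real \<Rightarrow> real^'n \<Rightarrow> real^'n^'n \<Rightarrow> real) \<Rightarrow> ((real^'n) \<times> real) set \<Rightarrow>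
   (real^'n \<Rightarrow> real \<Rightarrow> real) \<Rightarrow> bool" where
  "visc_super F D u \<longleftrightarrow>
     (\<forall>x0 t0. (x0,t0) \<in> D \<union> upper_base D \<longrightarrow>
       (\<forall>U phi Dphi D2phi phit. (x0,t0) \<in> U \<and> C21_on U phi Dphi D2phi phit \<and>
          (\<exists>r>0. \<forall>(y,s)\<in>test_nbhd D x0 t0 r. u y s - phi y s \<ge> u x0 t0 - phi x0 t0) \<longrightarrow>
          F x0 t0 (u x0 t0) (Dphi x0 t0) (D2phi x0 t0) - phit x0 t0 \<le> 0))"

definition broken_line_set :: "('a::real_vector) list \<Rightarrow> 'a set" where
  "broken_line_set ps = set ps \<union> (\<Union>i<length ps - 1. closed_segment (ps ! i) (ps ! Suc i))"

definition subordinate :: "((real^'n) \<times> real) set \<Rightarrow> (real^'n) \<times> real \<Rightarrow> (real^'n) \<times> real \<Rightarrow> bool" where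
  "subordinate D p0 p \<longleftrightarrow>
     (\<exists>ps. ps \<noteq> [] \<and> hd ps = p0 \<and> last ps = p \<and>
        broken_line_set ps - {p0} \<subseteq> D \<union> upper_base D \<and>
        inj_on snd (broken_line_set ps) \<and>
        (\<forall>q\<in>broken_line_set ps. snd q \<le> snd p0))"

end

theory Submission imports Defs "HOL-Real_Asymp.Real_Asymp" begin



lemma lat_ineq:
  fixes m K a sg T dl d R s tau z :: real
  assumes m: "m \<ge> 0" and K: "K \<ge> 0" and a: "a > 0" and sg: "0 < sg" "sg \<le> dl" and T: "0 < T" "T \<le> dl"
    and d: "0 \<le> d" "d \<le> dl" and dl1: "dl \<le> 1" and dlR: "dl \<le> R / 2" and dlC: "dl * (2*m + 2*K + 2 + a) \<le> a * R^2 / 4"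
    and s: "sg \<le> s" "s \<le> T + sg" and tau: "0 \<le> tau" and z: "R - dl \<le> z"
  shows "m * ln (T + sg) + K * T + a * d^2 / (T + sg) + 1 - m * ln s - K * tau - a * z^2 / s \<le> 0"
proof -
  have s0: "s > 0" using s sg by linarith
  have Ts: "T + sg > 0" using T sg by linarith
  have lnq: "ln (T + sg) - ln s \<le> (T + sg) / s - 1"
    using ln_le_minus_one[of "(T+sg)/s"] s0 Ts by (simp add: ln_div)
  have "s * (ln (T + sg) - ln s) \<le> s * ((T + sg) / s - 1)" using lnq s0 by (simp add: mult_left_mono)
  also have "\<dots> = T + sg - s" using s0 by (simp add: field_simps)
  finally have A: "m * (s * (ln (T + sg) - ln s)) \<le> m * (2 * dl)"
    using m s T sg by (intro mult_left_mono) auto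
  have B: "s * (K * T + 1) \<le> (2 * dl) * (K * dl + 1)"
    using s T sg K s0 by (intro mult_mono add_mono mult_left_mono) auto
  have "s * (a * d^2 / (T + sg)) \<le> (T + sg) * (a * d^2 / (T + sg))"
    using s a Ts by (intro mult_right_mono) auto
  also have "\<dots> = a * d^2" using Ts by simp
  also have "\<dots> \<le> a * dl^2" using d a by (intro mult_left_mono power_mono) auto
  also have "\<dots> \<le> a * dl"
  proof -
    have "dl * dl \<le> dl * 1" using d dl1 by (intro mult_left_mono) auto
    then show ?thesis using a by (simp add: power2_eq_square)
  qed
  finally have C: "s * (a * d^2 / (T + sg)) \<le> a * dl" .
  have D: "(2 * dl) * (K * dl + 1) \<le> 2 * dl * (K + 1)"
  proof -
    have "K * dl \<le> K * 1" using d dl1 K by (intro mult_left_mono) auto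
    then show ?thesis using d by (intro mult_left_mono) auto
  qed
  have "s * (m * ln (T + sg) + K * T + a * d^2 / (T + sg) + 1 - m * ln s)
        = m * (s * (ln (T + sg) - ln s)) + s * (K * T + 1) + s * (a * d^2 / (T + sg))"
    by (simp add: algebra_simps)
  also have "\<dots> \<le> dl * (2*m + 2*K + 2 + a)" using A B C D by (simp add: algebra_simps)
  also have "\<dots> \<le> a * R^2 / 4" by (rule dlC)
  also have "\<dots> \<le> a * z^2"
  proof -
    have "R / 2 \<le> z" using z dlR by linarith
    then have "(R/2)^2 \<le> z^2" using dlR d by (intro power_mono) auto
    then show ?thesis using a by (simp add: power_divide)
  qed
  finally have E: "s * (m * ln (T + sg) + K * T + a * d^2 / (T + sg) + 1 - m * ln s) \<le> a * z^2" .
  have "m * ln (T + sg) + K * T + a * d^2 / (T + sg) + 1 - m * ln s \<le> a * z^2 / s"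
    using E s0 by (simp add: field_simps mult.commute)
  moreover have "K * tau \<ge> 0" using K tau by simp
  ultimately show ?thesis by linarith
qed

lemma bot_ineq:
  fixes m K a sg T d rho z :: real
  assumes m: "m \<ge> 0" and a: "a > 0" and sg: "0 < sg" and T: "0 < T"
    and H: "m * (sg * ln (T + sg) - sg * ln sg) + sg * (K * T + a * d^2 / T + 1) < a * rho^2"
    and z: "rho \<le> z" and rho: "0 \<le> rho"
  shows "m * ln (T + sg) + K * T + a * d^2 / (T + sg) + 1 - m * ln sg - K * 0 - a * z^2 / sg \<le> 0"
proof -
  have "a * d^2 / (T + sg) \<le> a * d^2 / T" using a T sg by (intro divide_left_mono) auto
  then have "sg * (a * d^2 / (T + sg)) \<le> sg * (a * d^2 / T)" using sg by (intro mult_left_mono) auto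
  then have "sg * (m * ln (T + sg) + K * T + a * d^2 / (T + sg) + 1 - m * ln sg) < a * rho^2"
    using H by (simp add: algebra_simps)
  also have "\<dots> \<le> a * z^2" using z rho a by (intro mult_left_mono power_mono) auto
  finally show ?thesis using sg by (simp add: field_simps mult.commute)
qed

lemma xlnx: "((\<lambda>x::real. x * ln x) \<longlongrightarrow> 0) (at_right 0)"
  by real_asymp

lemma ex_sigma:
  fixes T m C e dl :: real
  assumes T: "T > 0" and e: "e > 0" and dl: "dl > 0"
  shows "\<exists>sg. 0 < sg \<and> sg \<le> dl \<and> m * (sg * ln (T + sg) - sg * ln sg) + sg * C < e"
proof -
  have lim: "((\<lambda>sg. m * (sg * ln (T + sg) - sg * ln sg) + sg * C) \<longlongrightarrow> m * (0 * ln (T + 0) - 0) + 0 * C) (at_right 0)"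
    by (intro tendsto_intros xlnx) (use T in auto)
  then have "eventually (\<lambda>sg. m * (sg * ln (T + sg) - sg * ln sg) + sg * C < e) (at_right 0)"
    using e by (intro order_tendstoD(2)) auto
  moreover have "eventually (\<lambda>sg. 0 < sg \<and> sg \<le> dl) (at_right (0::real))"
    using dl by (auto simp: eventually_at_right intro!: exI[of _ dl])
  ultimately have "eventually (\<lambda>sg. 0 < sg \<and> sg \<le> dl \<and> m * (sg * ln (T + sg) - sg * ln sg) + sg * C < e) (at_right (0::real))"
    by eventually_elim auto
  then show ?thesis using eventually_happens' trivial_limit_at_right_real by blast
qed

definition outer :: "real^'n \<Rightarrow> real^'n^'n" where
  "outer z = (\<chi> i j. z$i * z$j)"

lemma scaleR_mv: "(c *\<^sub>R A) *v h = c *\<^sub>R (A *v h)" for A :: "real^'n^'m"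
  by (simp add: vec_eq_iff matrix_vector_mult_def sum_distrib_left mult.assoc)

lemma outer_mult: "outer z *v h = (z \<bullet> h) *\<^sub>R z"
  by (simp add: outer_def vec_eq_iff matrix_vector_mult_def inner_vec_def sum_distrib_left mult.commute mult.left_commute)

lemma sym_outer: "sym_mat (c *\<^sub>R outer z)"
  by (simp add: sym_mat_def outer_def transpose_def vec_eq_iff mult.commute)

lemma sym_I: "sym_mat (c *\<^sub>R (mat 1 :: real^'n^'n))"
  by (simp add: sym_mat_def transpose_def vec_eq_iff mat_def)

lemma psd_outer: "c \<ge> 0 \<Longrightarrow> psd_mat (c *\<^sub>R outer z)"
  by (simp add: psd_mat_def scaleR_mv outer_mult inner_commute[of _ z] mult.assoc)

lemma psd_I: "c \<ge> 0 \<Longrightarrow> psd_mat (c *\<^sub>R (mat 1 :: real^'n^'n))"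
  by (simp add: psd_mat_def scaleR_mv)

lemma trace_outer: "trace (c *\<^sub>R outer z) = c * (z \<bullet> z)"
  by (simp add: trace_def outer_def inner_vec_def sum_distrib_left power2_eq_square)

lemma trace_I': "trace (c *\<^sub>R (mat 1 :: real^'n^'n)) = c * CARD('n)"
  by (simp add: trace_def mat_def)

lemma F_bound:
  fixes F :: "real^'n \<Rightarrow> real \<Rightarrow> real \<Rightarrow> real^'n \<Rightarrow> real^'n^'n \<Rightarrow> real"
  assumes S: "struct_S F E lam Lam b c" and xt: "(x,t) \<in> E" and F0: "F x t 0 0 0 = 0"
    and c1: "c1 \<ge> 0" and c2: "c2 \<ge> 0"
  shows "F x t r p (c1 *\<^sub>R mat 1 - c2 *\<^sub>R outer z) \<le>
         Lam * c1 * CARD('n) - lam * c2 * (z \<bullet> z) + b x t * norm p + c x t * r"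
proof -
  have sm: "sym_mat ((-c2) *\<^sub>R outer z)" by (rule sym_outer)
  have "F x t r p ((-c2) *\<^sub>R outer z + c1 *\<^sub>R mat 1) - F x t 0 0 ((-c2) *\<^sub>R outer z)
        \<le> Lam * trace (c1 *\<^sub>R (mat 1 :: real^'n^'n)) + b x t * norm (p - 0) + c x t * (r - 0)"
    using S xt sm sym_I psd_I[OF c1] unfolding struct_S_def by fast
  moreover have "lam * trace (c2 *\<^sub>R outer z) - b x t * norm (0 - 0::real^'n) + c x t * (0 - 0)
        \<le> F x t 0 0 ((-c2) *\<^sub>R outer z + c2 *\<^sub>R outer z) - F x t 0 0 ((-c2) *\<^sub>R outer z)"
    using S xt sm sym_outer psd_outer[OF c2] unfolding struct_S_def by fast
  moreover have "(-c2) *\<^sub>R outer z + c2 *\<^sub>R outer z = 0" by simp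
  moreover have "(-c2) *\<^sub>R outer z + c1 *\<^sub>R mat 1 = c1 *\<^sub>R mat 1 - c2 *\<^sub>R outer z" by simp
  ultimately show ?thesis using F0 by (simp add: trace_outer trace_I')
qed

locale bar = fixes y0 :: "real^'n" and s0 sg th0 m K a ep eta t1 M :: real
  assumes sg: "sg > 0"
begin
definition S where "S t = t - s0 + sg"
definition E where "E x t = exp (th0 - m * ln (S t) - K*(t - s0) - a * ((x-y0)\<bullet>(x-y0)) / S t)"
definition w where "w x t = M - ep * (E x t - 1) + eta / (t1 - t)"
definition Dw where "Dw x t = (ep * E x t * (2*a / S t)) *\<^sub>R (x - y0)"
definition D2w where "D2w x t = (ep * E x t * (2*a/S t)) *\<^sub>R mat 1 - (ep * E x t * (4*a^2/(S t)^2)) *\<^sub>R outer (x - y0)"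
definition wt where "wt x t = - ep * E x t * (- m / S t - K + a*((x-y0)\<bullet>(x-y0))/(S t)^2) + eta/(t1-t)^2"
definition U :: "((real^'n) \<times> real) set" where "U = {p. s0 - sg < snd p \<and> snd p < t1}"

lemma E_dx:
  assumes "S t > 0"
  shows "((\<lambda>x. E x t) has_derivative
     (\<lambda>h. (- 2 * a / S t * E y t) * ((y - y0) \<bullet> h))) (at y)"
  unfolding E_def
  apply (rule derivative_eq_intros refl)+
  using assms apply (auto simp: field_simps inner_commute inner_diff_left inner_diff_right)
  done

lemma w_dx:
  assumes "S t > 0"
  shows "((\<lambda>x. w x t) has_derivative (\<lambda>h. Dw y t \<bullet> h)) (at y)"
  unfolding w_def Dw_def
  apply (rule derivative_eq_intros refl E_dx assms)+
  using assms apply (auto simp: fun_eq_iff field_simps inner_commute inner_diff_right)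
  done

lemma Dw_dx:
  assumes "S t > 0"
  shows "((\<lambda>x. Dw x t) has_derivative (\<lambda>h. D2w y t *v h)) (at y)"
  unfolding Dw_def D2w_def
  apply (rule derivative_eq_intros refl E_dx assms)+
  using assms apply (simp add: fun_eq_iff matrix_vector_mult_diff_rdistrib outer_mult scaleR_mv power2_eq_square)
  done

lemma E_dt:
  assumes "S t > 0"
  shows "((\<lambda>r. E x r) has_real_derivative E x t * (- m / S t - K + a*((x-y0)\<bullet>(x-y0))/(S t)^2)) (at t)"
proof -
  have "((\<lambda>r. th0 - m * ln (S r) - K*(r - s0) - a * ((x-y0)\<bullet>(x-y0)) / S r) has_real_derivative
       (- m / S t - K + a*((x-y0)\<bullet>(x-y0))/(S t)^2)) (at t)"
    unfolding S_def
    using assms by (auto intro!: derivative_eq_intros simp: S_def field_simps power2_eq_square)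
  from DERIV_exp[THEN DERIV_chain2, OF this] show ?thesis unfolding E_def by simp
qed

lemma w_dt:
  assumes "S t > 0" "t < t1"
  shows "((\<lambda>r. w x r) has_real_derivative wt x t) (at t)"
  unfolding w_def wt_def
  apply (rule derivative_eq_intros refl E_dt assms)+
  using assms apply (auto simp: field_simps power2_eq_square)
  done

lemma open_U: "open U"
  unfolding U_def
  by (intro open_Collect_conj open_Collect_less continuous_intros)

lemma U_S: "p \<in> U \<Longrightarrow> S (snd p) > 0" "p \<in> U \<Longrightarrow> snd p < t1"
  by (auto simp: U_def S_def)

lemma cont_E: "continuous_on U (\<lambda>p. E (fst p) (snd p))"
  unfolding E_def S_def
  apply (intro continuous_intros)
  using U_S unfolding S_def by force+

lemma C21: "C21_on U w Dw D2w wt"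
  unfolding C21_on_def case_prod_unfold
proof (intro conjI ballI)
  show "open U" by (rule open_U)
  fix p assume p: "p \<in> U"
  show "((\<lambda>z. w z (snd p)) has_derivative (\<lambda>h. Dw (fst p) (snd p) \<bullet> h)) (at (fst p))"
    by (rule w_dx U_S p)+
  show "((\<lambda>z. Dw z (snd p)) has_derivative (\<lambda>h. D2w (fst p) (snd p) *v h)) (at (fst p))"
    by (rule Dw_dx U_S p)+
  show "((\<lambda>r. w (fst p) r) has_real_derivative wt (fst p) (snd p)) (at (snd p))"
    by (rule w_dt U_S p)+
next
  have t1: "\<And>p. p \<in> U \<Longrightarrow> t1 - snd p \<noteq> 0" using U_S(2) by force
  have S0: "\<And>p. p \<in> U \<Longrightarrow> S (snd p) \<noteq> 0" using U_S(1) by force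
  have t1': "\<forall>x\<in>U. t1 - snd x \<noteq> 0" using t1 by auto
  have S0': "\<forall>x\<in>U. S (snd x) \<noteq> 0" using S0 by auto
  have S2: "\<forall>x\<in>U. (S (snd x))^2 \<noteq> 0" using S0 by auto
  have t2: "\<forall>x\<in>U. (t1 - snd x)^2 \<noteq> 0" using t1 by auto
  have cS: "continuous_on U (\<lambda>p. S (snd p))" unfolding S_def by (intro continuous_intros)
  show "continuous_on U (\<lambda>p. w (fst p) (snd p))"
    unfolding w_def by (intro continuous_intros cont_E t1 t1')
  show "continuous_on U (\<lambda>p. Dw (fst p) (snd p))"
    unfolding Dw_def by (intro continuous_intros cont_E cS S0 S0' S2)
  show "continuous_on U (\<lambda>p. D2w (fst p) (snd p))"
    unfolding D2w_def outer_def by (intro continuous_intros cont_E cS S0 S0' S2)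
  show "continuous_on U (\<lambda>p. wt (fst p) (snd p))"
    unfolding wt_def by (intro continuous_intros cont_E cS S0 S0' S2 t1 t1' t2)
qed

lemma strict:
  fixes F :: "real^'n \<Rightarrow> real \<Rightarrow> real \<Rightarrow> real^'n \<Rightarrow> real^'n^'n \<Rightarrow> real"
  assumes Sst: "struct_S F Ed lam Lam b c" and xt: "(x,t) \<in> Ed" and F0: "F x t 0 0 0 = 0"
    and St: "S t > 0" and tt: "t < t1"
    and bC: "b x t \<le> Cb" "b x t \<ge> 0" and cC: "- c x t \<le> Cc" "c x t \<le> 0"
    and lam: "lam > 0" and aa: "2*lam*a = 1" and mm: "m = 2*a*Lam*CARD('n)" and KK: "K = a*Cb^2 + Cc + 1"
    and ep: "ep > 0" and eta: "eta \<ge> 0" and M: "M \<ge> 0" and r: "r > w x t"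
  shows "F x t r (Dw x t) (D2w x t) - wt x t < 0"
proof -
  define EE where "EE = E x t"
  define nz where "nz = norm (x - y0)"
  define SS where "SS = S t"
  have Epos: "EE > 0" unfolding EE_def E_def by simp
  have a: "a > 0" using lam aa by (metis zero_less_mult_pos zero_less_one mult_pos_pos zero_less_numeral)
  have SS: "SS > 0" using St SS_def by simp
  have q: "(x - y0) \<bullet> (x - y0) = nz^2" unfolding nz_def by (simp add: power2_norm_eq_inner)
  define c1 where "c1 = ep * EE * (2*a/SS)"
  define c2 where "c2 = ep * EE * (4*a^2/SS^2)"
  have c1: "c1 \<ge> 0" unfolding c1_def using ep Epos a SS by simp
  have c2: "c2 \<ge> 0" unfolding c2_def using ep Epos a SS by simp
  have D2: "D2w x t = c1 *\<^sub>R mat 1 - c2 *\<^sub>R outer (x - y0)"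
    unfolding D2w_def c1_def c2_def EE_def SS_def ..
  have FB: "F x t r (Dw x t) (D2w x t) \<le> Lam * c1 * CARD('n) - lam * c2 * nz^2 + b x t * norm (Dw x t) + c x t * r"
    unfolding D2 q[symmetric] by (rule F_bound[OF Sst xt F0 c1 c2])
  have nD: "norm (Dw x t) = ep * EE * (2*a/SS) * nz"
    unfolding Dw_def EE_def[symmetric] SS_def[symmetric] nz_def using ep Epos a SS by simp
  have bD: "b x t * norm (Dw x t) \<le> Cb * (ep * EE * (2*a/SS) * nz)"
    unfolding nD by (rule mult_right_mono[OF bC(1)]) (use ep Epos a SS nz_def in simp)
  have w_lb: "w x t \<ge> - ep * EE"
  proof -
    have "eta / (t1 - t) \<ge> 0" using eta tt by simp
    then show ?thesis unfolding w_def EE_def using M ep by (simp add: algebra_simps)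
  qed
  have cr: "c x t * r \<le> Cc * (ep * EE)"
  proof (cases "r \<ge> 0")
    case True
    then have "c x t * r \<le> 0" using cC(2) by (simp add: mult_nonpos_nonneg)
    moreover have "Cc \<ge> 0" using cC by linarith
    ultimately show ?thesis using ep Epos by (smt (verit) mult_nonneg_nonneg)
  next
    case False
    then have "- r \<le> ep * EE" using r w_lb by linarith
    then have "(- c x t) * (- r) \<le> Cc * (ep * EE)"
      using cC False by (intro mult_mono) auto
    then show ?thesis by simp
  qed
  have wtb: "- wt x t \<le> ep * EE * (- m / SS - K + a * nz^2 / SS^2)"
  proof -
    have "eta / (t1 - t)^2 \<ge> 0" using eta by simp
    then show ?thesis unfolding wt_def EE_def[symmetric] SS_def[symmetric] q by simp
  qed
  have lamv: "lam = 1 / (2*a)" using aa a by (simp add: field_simps)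
  have iden: "Lam * c1 * CARD('n) - lam * c2 * nz^2 + Cb * (ep * EE * (2*a/SS) * nz) + Cc * (ep * EE)
      + ep * EE * (- m / SS - K + a * nz^2 / SS^2) = ep * EE * (- a * (nz/SS - Cb)^2 - 1)"
    unfolding c1_def c2_def lamv mm KK using a SS
    by (simp add: field_simps power2_eq_square)
  have "ep * EE * (- a * (nz/SS - Cb)^2 - 1) < 0"
  proof (rule mult_pos_neg)
    show "0 < ep * EE" using ep Epos by simp
    have "a * (nz/SS - Cb)^2 \<ge> 0" using a by simp
    then show "- a * (nz/SS - Cb)^2 - 1 < 0" by simp
  qed
  then show ?thesis using FB bD cr wtb iden by linarith
qed

lemma E_le:
  assumes "m \<ge> 0" "K \<ge> 0" "a \<ge> 0" "t \<ge> s0"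
  shows "E x t \<le> exp (th0 - m * ln sg)"
proof -
  have St: "S t \<ge> sg" using assms unfolding S_def by simp
  then have "ln (S t) \<ge> ln sg" using sg by simp
  then have "m * ln (S t) \<ge> m * ln sg" using assms by (simp add: mult_left_mono)
  moreover have "K * (t - s0) \<ge> 0" using assms by simp
  moreover have "a * ((x-y0)\<bullet>(x-y0)) / S t \<ge> 0" using assms St sg by simp
  ultimately show ?thesis unfolding E_def by simp
qed

lemma compare:
  fixes F :: "real^'n \<Rightarrow> real \<Rightarrow> real \<Rightarrow> real^'n \<Rightarrow> real^'n^'n \<Rightarrow> real"
    and D :: "((real^'n) \<times> real) set" and u :: "real^'n \<Rightarrow> real \<Rightarrow> real"
  assumes Sst: "struct_S F (D \<union> upper_base D) lam Lam b c"
    and bds: "\<forall>(x,t)\<in>D. b x t \<le> Cb \<and> - c x t \<le> Cc \<and> b x t \<ge> 0 \<and> c x t \<le> 0"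
    and F0: "\<forall>(x,t)\<in>D. F x t 0 0 0 = 0"
    and visc: "visc_sub F D u"
    and ucont: "continuous_on (D \<union> upper_base D) (\<lambda>(x,t). u x t)"
    and uM: "\<forall>(x,t)\<in>D. u x t \<le> M"
    and lam: "lam > 0" and Lam: "lam \<le> Lam" and aa: "2*lam*a = 1" and mm: "m = 2*a*Lam*CARD('n)"
    and KK: "K = a*Cb^2 + Cc + 1" and Cc: "Cc \<ge> 0"
    and ep: "ep > 0" and eta: "eta > 0" and M: "M \<ge> 0"
    and cylD: "\<forall>x t. dist x x1 \<le> R \<and> s0 \<le> t \<and> t < t1 \<longrightarrow> (x,t) \<in> D"
    and lat: "\<forall>x t. dist x x1 = R \<and> s0 \<le> t \<and> t < t1 \<longrightarrow> E x t \<le> 1"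
    and bot: "\<forall>x. dist x x1 \<le> R \<longrightarrow> u x s0 \<le> w x s0"
  shows "\<forall>x t. dist x x1 \<le> R \<and> s0 \<le> t \<and> t < t1 \<longrightarrow> u x t \<le> w x t"
proof (rule ccontr)
  assume "\<not> ?thesis"
  then obtain xq tq where q: "dist xq x1 \<le> R" "s0 \<le> tq" "tq < t1" and uq: "u xq tq > w xq tq"
    by (auto simp: not_le)
  have a: "a > 0" using lam aa by (metis zero_less_mult_pos zero_less_one mult_pos_pos zero_less_numeral)
  have m0: "m \<ge> 0" using mm a lam Lam by simp
  have K0: "K \<ge> 0" using KK a Cc by simp
  define Eb where "Eb = exp (th0 - m * ln sg)"
  have Eb: "\<And>x t. t \<ge> s0 \<Longrightarrow> E x t \<le> Eb" unfolding Eb_def using E_le m0 K0 a by simp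
  have Eb0: "Eb > 0" unfolding Eb_def by simp
  define kp where "kp = eta / (ep * Eb + 1)"
  have epEb: "ep * Eb + 1 > 0" using ep Eb0 by (simp add: add_pos_pos)
  have kp: "kp > 0" unfolding kp_def using eta epEb by simp
  define f where "f p = u (fst p) (snd p) - w (fst p) (snd p)" for p
  have slab: "f (x,t) < 0" if "dist x x1 \<le> R" "s0 \<le> t" "t < t1" "t1 - kp \<le> t" for x t
  proof -
    have uxt: "u x t \<le> M" using uM cylD that by fastforce
    have "eta / (t1 - t) \<ge> eta / kp"
      using that kp eta by (intro divide_left_mono) auto
    also have "eta / kp = ep * Eb + 1" unfolding kp_def using eta epEb by simp
    finally have "eta / (t1 - t) \<ge> ep * Eb + 1" .
    moreover have "ep * E x t \<le> ep * Eb" using Eb[OF that(2)] ep by simp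
    moreover have "ep * (E x t - 1) = ep * E x t - ep" by algebra
    ultimately show ?thesis unfolding f_def w_def fst_conv snd_conv using uxt ep by linarith
  qed
  have tq: "tq \<le> t1 - kp"
  proof (rule ccontr)
    assume "\<not> tq \<le> t1 - kp"
    then have "f (xq,tq) < 0" using slab[OF q] by simp
    then show False using uq unfolding f_def by simp
  qed
  define Kc where "Kc = cball x1 R \<times> {s0..t1 - kp}"
  have Kc_sub: "p \<in> Kc \<Longrightarrow> dist (fst p) x1 \<le> R \<and> s0 \<le> snd p \<and> snd p < t1" for p
    unfolding Kc_def using kp by (auto simp: dist_commute)
  have KcD: "Kc \<subseteq> D" using Kc_sub cylD by force
  have KcU: "Kc \<subseteq> U" using Kc_sub sg unfolding U_def by force
  have compKc: "compact Kc" unfolding Kc_def by (intro compact_Times compact_cball compact_Icc)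
  have qK: "(xq,tq) \<in> Kc" unfolding Kc_def using q tq by (auto simp: dist_commute)
  have "continuous_on Kc (\<lambda>(x,t). u x t)"
    by (rule continuous_on_subset[OF ucont]) (use KcD in blast)
  then have cu: "continuous_on Kc (\<lambda>p. u (fst p) (snd p))" by (simp add: case_prod_unfold)
  have "continuous_on U (\<lambda>p. w (fst p) (snd p))"
    using C21 unfolding C21_on_def case_prod_unfold by (elim conjE)
  then have cw: "continuous_on Kc (\<lambda>p. w (fst p) (snd p))"
    by (rule continuous_on_subset) (rule KcU)
  have cf: "continuous_on Kc f" unfolding f_def by (intro continuous_intros cu cw)
  obtain ps where ps: "ps \<in> Kc" and psmax: "\<forall>p\<in>Kc. f p \<le> f ps"
    using continuous_attains_sup[OF compKc _ cf] qK by blast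
  obtain xs ts where pse: "ps = (xs,ts)" by (cases ps)
  have fpos: "f ps > 0" using psmax qK uq unfolding f_def by force
  have xsK: "dist xs x1 \<le> R" "s0 \<le> ts" "ts \<le> t1 - kp" using ps pse unfolding Kc_def by (auto simp: dist_commute)
  have psD: "(xs,ts) \<in> D" using KcD ps pse by auto
  have xsR: "dist xs x1 < R"
  proof (rule ccontr)
    assume "\<not> ?thesis"
    then have "dist xs x1 = R" using xsK by simp
    then have "E xs ts \<le> 1" using lat xsK kp by simp
    moreover have "eta / (t1 - ts) \<ge> 0" using eta xsK kp by simp
    moreover have "u xs ts \<le> M" using uM psD by auto
    moreover have "ep * E xs ts \<le> ep" using \<open>E xs ts \<le> 1\<close> ep by simp
    moreover have "ep * (E xs ts - 1) = ep * E xs ts - ep" by algebra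
    ultimately have "f ps \<le> 0" unfolding f_def pse w_def fst_conv snd_conv by linarith
    then show False using fpos by simp
  qed
  have tss: "ts > s0"
  proof (rule ccontr)
    assume "\<not> ?thesis"
    then have "ts = s0" using xsK by simp
    then have "f ps \<le> 0" using bot xsK unfolding f_def pse by simp
    then show False using fpos by simp
  qed
  define r where "r = min (R - dist xs x1) (min (ts - s0) (t1 - ts))"
  have r: "r > 0" unfolding r_def using xsR tss xsK kp by simp
  have loc: "\<forall>(y,s)\<in>test_nbhd D xs ts r. u y s - w y s \<le> u xs ts - w xs ts"
  proof (clarify)
    fix y s assume "(y,s) \<in> test_nbhd D xs ts r"
    then have ys: "(y,s) \<in> D" "dist y xs < r" "\<bar>s - ts\<bar> < r" using psD unfolding test_nbhd_def by auto
    have "dist y x1 \<le> dist y xs + dist xs x1" by (rule dist_triangle)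
    then have y1: "dist y x1 \<le> R" using ys r_def by linarith
    have s1: "s0 \<le> s" "s < t1" using ys r_def by (auto simp: abs_less_iff)
    show "u y s - w y s \<le> u xs ts - w xs ts"
    proof (cases "s \<le> t1 - kp")
      case True
      then have "(y,s) \<in> Kc" unfolding Kc_def using y1 s1 by (auto simp: dist_commute)
      then show ?thesis using psmax pse unfolding f_def by force
    next
      case False
      then have "f (y,s) < 0" using slab[OF y1 s1] by simp
      then show ?thesis using fpos pse unfolding f_def by simp
    qed
  qed
  have psU: "(xs,ts) \<in> U" unfolding U_def using tss sg xsK kp by simp
  have "F xs ts (u xs ts) (Dw xs ts) (D2w xs ts) - wt xs ts \<ge> 0"
  proof -
    have "(xs,ts) \<in> D \<union> upper_base D" using psD by simp
    from visc[unfolded visc_sub_def, rule_format, OF this, of U w Dw D2w wt]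
    show ?thesis using psU C21 r loc by blast
  qed
  moreover have "F xs ts (u xs ts) (Dw xs ts) (D2w xs ts) - wt xs ts < 0"
  proof (rule strict[OF Sst])
    show "(xs, ts) \<in> D \<union> upper_base D" using psD by simp
    show "F xs ts 0 0 0 = 0" using F0 psD by auto
    show "S ts > 0" unfolding S_def using tss sg by simp
    show "ts < t1" using xsK kp by simp
    show "b xs ts \<le> Cb" "b xs ts \<ge> 0" "- c xs ts \<le> Cc" "c xs ts \<le> 0" using bds psD by auto
    show "u xs ts > w xs ts" using fpos pse unfolding f_def by simp
  qed (use lam aa mm KK ep eta M in auto)
  ultimately show False by simp
qed

end

lemma dist_pair_le: "dist (x::'a::metric_space, t::real) (x1, t1) \<le> dist x x1 + \<bar>t - t1\<bar>"
  unfolding dist_Pair_Pair dist_real_def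
  using sqrt_sum_squares_le_sum_abs[of "dist x x1" "t - t1"] by simp

lemma dist_pair_same: "dist (x::'a::metric_space, t::real) (x1, t) = dist x x1"
  unfolding dist_Pair_Pair by simp

lemma past_cyl:
  fixes D :: "((real^'n) \<times> real) set"
  assumes oD: "open D" and P: "(x1,t1) \<in> D \<union> upper_base D"
  shows "\<exists>h>0. \<forall>x t. dist x x1 < h \<and> t1 - h < t \<and> t < t1 \<longrightarrow> (x,t) \<in> D"
proof (cases "(x1,t1) \<in> D")
  case True
  then obtain e where e: "e > 0" "ball (x1,t1) e \<subseteq> D" using oD open_contains_ball by blast
  show ?thesis
  proof (intro exI[of _ "e/2"] conjI allI impI)
    show "e/2 > 0" using e by simp
    fix x t assume xt: "dist x x1 < e/2 \<and> t1 - e/2 < t \<and> t < t1"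
    have "dist (x,t) (x1,t1) \<le> dist x x1 + \<bar>t - t1\<bar>" by (rule dist_pair_le)
    also have "\<dots> < e" using xt by (simp add: abs_if)
    finally show "(x,t) \<in> D" using e by (auto simp: dist_commute)
  qed
next
  case False
  then have "(x1,t1) \<in> upper_base D" using P by simp
  then obtain h where h: "h > 0" "cyl x1 h (t1-h) t1 \<subseteq> D" unfolding upper_base_def by auto
  then show ?thesis unfolding cyl_def by (intro exI[of _ h]) auto
qed


lemma local_cyl:
  fixes F :: "real^'n \<Rightarrow> real \<Rightarrow> real \<Rightarrow> real^'n \<Rightarrow> real^'n^'n \<Rightarrow> real"
    and D :: "((real^'n) \<times> real) set" and u :: "real^'n \<Rightarrow> real \<Rightarrow> real"
  assumes oD: "open D"
    and Sst: "struct_S F (D \<union> upper_base D) lam Lam b c"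
    and bds: "\<forall>(x,t)\<in>D. b x t \<le> Cb \<and> - c x t \<le> Cc \<and> b x t \<ge> 0 \<and> c x t \<le> 0"
    and F0: "\<forall>(x,t)\<in>D. F x t 0 0 0 = 0"
    and visc: "visc_sub F D u"
    and ucont: "continuous_on (D \<union> upper_base D) (\<lambda>(x,t). u x t)"
    and uM: "\<forall>(x,t)\<in>D \<union> upper_base D. u x t \<le> M"
    and lam: "lam > 0" and Lam: "lam \<le> Lam" and Cc: "Cc \<ge> 0" and M: "M \<ge> 0"
    and P: "(x1,t1) \<in> D \<union> upper_base D" and uP: "u x1 t1 = M"
  shows "\<exists>dl>0. \<forall>x t. dist x x1 < dl \<and> t1 - dl < t \<and> t < t1 \<longrightarrow> u x t = M"
proof -
  obtain h where h: "h > 0" and hD: "\<forall>x t. dist x x1 < h \<and> t1 - h < t \<and> t < t1 \<longrightarrow> (x,t) \<in> D"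
    using past_cyl[OF oD P] by blast
  have uMD: "\<forall>(x,t)\<in>D. u x t \<le> M" using uM by auto
  define R where "R = h/2"
  have R: "R > 0" "R < h" using h R_def by auto
  define a where "a = 1/(2*lam)"
  have a: "a > 0" using lam a_def by simp
  have aa: "2*lam*a = 1" using lam a_def by simp
  define m where "m = 2*a*Lam*CARD('n)"
  define K where "K = a*Cb^2 + Cc + 1"
  have m0: "m \<ge> 0" using m_def a lam Lam by simp
  have K0: "K \<ge> 0" using K_def a Cc by simp
  define C0 where "C0 = 2*m + 2*K + 2 + a"
  have C0: "C0 > 0" using C0_def m0 K0 a by simp
  define dl where "dl = min (R/2) (min 1 (a*R^2/4 / C0))"
  have dlp: "dl > 0" unfolding dl_def using R a C0 by simp
  have dl: "dl \<le> R/2" "dl \<le> 1" "dl * C0 \<le> a*R^2/4"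
  proof -
    show "dl \<le> R/2" "dl \<le> 1" unfolding dl_def by auto
    have "dl \<le> a*R^2/4 / C0" unfolding dl_def by auto
    then show "dl * C0 \<le> a*R^2/4" using C0 by (simp add: field_simps)
  qed
  show ?thesis
  proof (intro exI[of _ dl] conjI allI impI)
    show "dl > 0" by (rule dlp)
    fix y0 s0 assume Q: "dist y0 x1 < dl \<and> t1 - dl < s0 \<and> s0 < t1"
    have QD: "(y0,s0) \<in> D" using hD Q dl R by auto
    have uQ: "u y0 s0 \<le> M" using uM QD by auto
    show "u y0 s0 = M"
    proof (rule ccontr)
      assume "u y0 s0 \<noteq> M"
      then have lt: "u y0 s0 < M" using uQ by simp
      define e0 where "e0 = (M - u y0 s0)/2"
      have e0: "e0 > 0" using lt e0_def by simp
      have "\<exists>dd>0. \<forall>p'\<in>D \<union> upper_base D. dist p' (y0,s0) < dd \<longrightarrow>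
               dist ((\<lambda>(x,t). u x t) p') ((\<lambda>(x,t). u x t) (y0,s0)) < e0"
        using ucont QD e0 unfolding continuous_on_iff by blast
      then obtain dd where dd: "dd > 0" and ddc: "\<forall>p'\<in>D \<union> upper_base D. dist p' (y0,s0) < dd \<longrightarrow>
               dist ((\<lambda>(x,t). u x t) p') (u y0 s0) < e0" by auto
      define rho where "rho = min (dd/2) (R/4)"
      have rho: "rho > 0" using dd R rho_def by simp
      have ubot: "u y s0 \<le> M - e0" if y: "dist y y0 \<le> rho" for y
      proof -
        have "dist y x1 \<le> dist y y0 + dist y0 x1" by (rule dist_triangle)
        also have "\<dots> < h" using y Q dl R rho_def by auto
        finally have yD: "(y,s0) \<in> D" using hD Q dl R by auto
        have "dist (y,s0) (y0,s0) < dd" using y rho_def dd by (simp add: dist_pair_same)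
        then have "dist (u y s0) (u y0 s0) < e0" using ddc[rule_format, of "(y,s0)"] yD by simp
        then have "\<bar>u y s0 - u y0 s0\<bar> < e0" unfolding dist_real_def .
        then show ?thesis using abs_ge_self[of "u y s0 - u y0 s0"] unfolding e0_def by argo
      qed
      define T where "T = t1 - s0"
      have T: "0 < T" "T \<le> dl" using Q T_def by auto
      define d where "d = dist x1 y0"
      have d: "0 \<le> d" "d \<le> dl" using Q d_def by (auto simp: dist_commute)
      obtain sg where sg: "0 < sg" "sg \<le> dl"
        and sgH: "m*(sg*ln(T+sg) - sg*ln sg) + sg*(K*T + a*d^2/T + 1) < a*rho^2"
        using ex_sigma[of T "a*rho^2" dl m "K*T + a*d^2/T + 1"] T dlp a rho by auto
      define th0 where "th0 = m*ln(T+sg) + K*T + a*d^2/(T+sg) + 1"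
      define Eb where "Eb = exp(th0 - m*ln sg)"
      define ep where "ep = e0 / Eb"
      have ep: "ep > 0" unfolding ep_def Eb_def using e0 by simp
      have epEb: "ep * Eb = e0" unfolding ep_def Eb_def by simp
      define Ef where "Ef x t = exp (th0 - m * ln (t - s0 + sg) - K*(t - s0) - a * ((x-y0)\<bullet>(x-y0)) / (t - s0 + sg))" for x t
      have comp: "u x1 t \<le> M - ep*(Ef x1 t - 1) + eta/(t1 - t)" if eta: "eta > 0" and t: "s0 \<le> t" "t < t1" for eta t
      proof -
        interpret B: bar y0 s0 sg th0 m K a ep eta t1 M by unfold_locales (rule sg(1))
        have EE: "B.E = Ef" by (auto simp: fun_eq_iff B.E_def B.S_def Ef_def)
        have "\<forall>x t. dist x x1 \<le> R \<and> s0 \<le> t \<and> t < t1 \<longrightarrow> u x t \<le> B.w x t"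
        proof (rule B.compare[OF Sst bds F0 visc ucont uMD lam Lam aa m_def K_def Cc ep eta M])
          show "\<forall>x t. dist x x1 \<le> R \<and> s0 \<le> t \<and> t < t1 \<longrightarrow> (x, t) \<in> D"
            using hD Q dl R by auto
          show "\<forall>x t. dist x x1 = R \<and> s0 \<le> t \<and> t < t1 \<longrightarrow> B.E x t \<le> 1"
          proof (intro allI impI)
            fix x t assume xt: "dist x x1 = R \<and> s0 \<le> t \<and> t < t1"
            have "R \<le> dist x y0 + dist y0 x1" using xt dist_triangle[of x x1 y0] by simp
            then have z: "R - dl \<le> dist x y0" using Q by linarith
            have q: "(x-y0)\<bullet>(x-y0) = (dist x y0)^2" by (simp add: dist_norm power2_norm_eq_inner)
            have "m * ln (T + sg) + K * T + a * d^2 / (T + sg) + 1 - m * ln (t - s0 + sg) - K * (t - s0)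
                  - a * (dist x y0)^2 / (t - s0 + sg) \<le> 0"
              by (rule lat_ineq[OF m0 K0 a sg T d dl(2) dl(1)]) (use dl(3) C0_def xt T_def z in auto)
            then show "B.E x t \<le> 1" unfolding B.E_def B.S_def unfolding th0_def q by simp
          qed
          show "\<forall>x. dist x x1 \<le> R \<longrightarrow> u x s0 \<le> B.w x s0"
          proof (intro allI impI)
            fix x assume x: "dist x x1 \<le> R"
            have xD: "(x,s0) \<in> D" using hD Q dl R x by auto
            have pen: "eta / (t1 - s0) \<ge> 0" using eta Q by simp
            have q: "(x-y0)\<bullet>(x-y0) = (dist x y0)^2" by (simp add: dist_norm power2_norm_eq_inner)
            show "u x s0 \<le> B.w x s0"
            proof (cases "dist x y0 \<le> rho")
              case True
              have "Ef x s0 \<le> Eb" unfolding Ef_def Eb_def using a sg by simp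
              then have "ep * Ef x s0 \<le> e0" using ep epEb by (metis mult_left_mono less_imp_le)
              moreover have "ep * (Ef x s0 - 1) = ep * Ef x s0 - ep" by algebra
              ultimately show ?thesis unfolding B.w_def EE using ubot[OF True] pen ep by linarith
            next
              case False
              have "m * ln (T + sg) + K * T + a * d^2 / (T + sg) + 1 - m * ln sg - K * 0 - a * (dist x y0)^2 / sg \<le> 0"
                by (rule bot_ineq[OF m0 a sg(1) T(1) sgH]) (use False rho in auto)
              then have "Ef x s0 \<le> 1" unfolding Ef_def th0_def q by simp
              then have "ep * Ef x s0 \<le> ep" using ep by simp
              moreover have "ep * (Ef x s0 - 1) = ep * Ef x s0 - ep" by algebra
              moreover have "u x s0 \<le> M" using uMD xD by auto
              ultimately show ?thesis unfolding B.w_def EE using pen by linarith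
            qed
          qed
        qed
        then show ?thesis using t unfolding B.w_def EE using R by auto
      qed
      have key: "u x1 t \<le> M - ep*(Ef x1 t - 1)" if t: "s0 \<le> t" "t < t1" for t
      proof (rule field_le_epsilon)
        fix e :: real assume e: "0 < e"
        have "u x1 t \<le> M - ep*(Ef x1 t - 1) + (e*(t1-t))/(t1 - t)"
          using comp[of "e*(t1-t)" t] e t by simp
        then show "u x1 t \<le> M - ep*(Ef x1 t - 1) + e" using t by simp
      qed
      have lim1: "((\<lambda>t. u x1 t) \<longlongrightarrow> M) (at_left t1)"
      proof (rule tendstoI)
        fix e :: real assume e: "e > 0"
        have "\<exists>dd>0. \<forall>p'\<in>D \<union> upper_base D. dist p' (x1,t1) < dd \<longrightarrow>
               dist ((\<lambda>(x,t). u x t) p') ((\<lambda>(x,t). u x t) (x1,t1)) < e"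
          using ucont P e unfolding continuous_on_iff by blast
        then obtain d1 where d1: "d1 > 0" and dc: "\<forall>p'\<in>D \<union> upper_base D. dist p' (x1,t1) < d1 \<longrightarrow>
               dist ((\<lambda>(x,t). u x t) p') (u x1 t1) < e" by auto
        show "eventually (\<lambda>t. dist (u x1 t) M < e) (at_left t1)"
          unfolding eventually_at_left_field
        proof (intro exI[of _ "t1 - min d1 h"] conjI allI impI)
          show "t1 - min d1 h < t1" using d1 h by simp
          fix t assume t: "t1 - min d1 h < t" "t < t1"
          have tD: "(x1,t) \<in> D" using hD[rule_format, of x1 t] t h by (simp add: min_less_iff_disj)
          have "dist (x1,t) (x1,t1) = \<bar>t - t1\<bar>" by (simp add: dist_Pair_Pair dist_real_def)
          also have "\<dots> < d1" using t by auto
          finally show "dist (u x1 t) M < e" using dc[rule_format, of "(x1,t)"] tD uP by simp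
        qed
      qed
      have Tsg: "T + sg > 0" using T sg by simp
      have lim2: "((\<lambda>t. M - ep*(Ef x1 t - 1)) \<longlongrightarrow> M - ep*(Ef x1 t1 - 1)) (at_left t1)"
        unfolding Ef_def by (intro tendsto_intros) (use Tsg T_def in auto)
      have ev: "eventually (\<lambda>t. u x1 t \<le> M - ep*(Ef x1 t - 1)) (at_left t1)"
        unfolding eventually_at_left_field using Q key by (intro exI[of _ s0]) auto
      have "M \<le> M - ep*(Ef x1 t1 - 1)"
        by (rule tendsto_le[OF trivial_limit_at_left_real lim2 lim1 ev])
      moreover have "Ef x1 t1 = exp 1"
      proof -
        have q: "(x1-y0)\<bullet>(x1-y0) = d^2" by (simp add: d_def dist_norm power2_norm_eq_inner)
        show ?thesis unfolding Ef_def th0_def q using T_def by simp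
      qed
      moreover have "exp (1::real) > 1" by simp
      moreover have "ep * (exp 1 - 1) > 0" using ep \<open>exp (1::real) > 1\<close> by simp
      ultimately show False by simp
    qed
  qed
qed


lemma bls_single: "broken_line_set [p] = {p}"
  by (simp add: broken_line_set_def)

lemma UN_less_Suc_0: "(\<Union>i<Suc n. A i) = A 0 \<union> (\<Union>i<n. A (Suc i))"
  by (auto simp: less_Suc_eq_0_disj)

lemma bls_cons: "ps \<noteq> [] \<Longrightarrow> broken_line_set (p # ps) = closed_segment p (hd ps) \<union> broken_line_set ps"
proof -
  assume ps: "ps \<noteq> []"
  then obtain q qs where pq: "ps = q # qs" by (cases ps) auto
  have "(\<Union>i<length (p # ps) - 1. closed_segment ((p # ps) ! i) ((p # ps) ! Suc i))
        = closed_segment p q \<union> (\<Union>i<length ps - 1. closed_segment (ps ! i) (ps ! Suc i))"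
    unfolding pq by (simp add: UN_less_Suc_0)
  moreover have "p \<in> closed_segment p q" by simp
  moreover have "q \<in> set ps" using pq by simp
  ultimately show ?thesis unfolding broken_line_set_def using pq by auto
qed

lemma bls_props:
  fixes ps :: "('a::real_normed_vector) list"
  shows "ps \<noteq> [] \<Longrightarrow> compact (broken_line_set ps) \<and> connected (broken_line_set ps) \<and> hd ps \<in> broken_line_set ps"
proof (induction ps)
  case Nil then show ?case by simp
next
  case (Cons p ps)
  show ?case
  proof (cases "ps = []")
    case True then show ?thesis by (simp add: bls_single)
  next
    case False
    have IH: "compact (broken_line_set ps)" "connected (broken_line_set ps)" "hd ps \<in> broken_line_set ps"
      using Cons.IH False by auto
    have "hd ps \<in> closed_segment p (hd ps)" by simp
    then have "closed_segment p (hd ps) \<inter> broken_line_set ps \<noteq> {}" using IH(3) by blast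
    then show ?thesis unfolding bls_cons[OF False] using IH
      by (auto intro!: compact_Un connected_Un compact_segment connected_segment)
  qed
qed

lemma last_in_bls: "ps \<noteq> [] \<Longrightarrow> last ps \<in> broken_line_set ps"
  by (simp add: broken_line_set_def)

lemma hd_in_bls: "ps \<noteq> [] \<Longrightarrow> hd ps \<in> broken_line_set ps"
  by (simp add: broken_line_set_def)


lemma sub_case:
  fixes F :: "real^'n \<Rightarrow> real \<Rightarrow> real \<Rightarrow> real^'n \<Rightarrow> real^'n^'n \<Rightarrow> real"
    and D :: "((real^'n) \<times> real) set" and u :: "real^'n \<Rightarrow> real \<Rightarrow> real"
  assumes oD: "open D"
    and Sst: "struct_S F (D \<union> upper_base D) lam Lam b c"
    and bds: "\<forall>(x,t)\<in>D. b x t \<le> Cb \<and> - c x t \<le> Cc \<and> b x t \<ge> 0 \<and> c x t \<le> 0"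
    and F0: "\<forall>(x,t)\<in>D. F x t 0 0 0 = 0"
    and visc: "visc_sub F D u"
    and ucont: "continuous_on (D \<union> upper_base D) (\<lambda>(x,t). u x t)"
    and uM: "\<forall>(x,t)\<in>D \<union> upper_base D. u x t \<le> M"
    and lam: "lam > 0" and Lam: "lam \<le> Lam" and Cc: "Cc \<ge> 0" and M: "M \<ge> 0"
    and P0: "(x0,t0) \<in> D \<union> upper_base D" and uP: "u x0 t0 = M"
    and sub: "subordinate D (x0,t0) (x',t')"
  shows "u x' t' = M"
proof (rule ccontr)
  assume ne: "u x' t' \<noteq> M"
  obtain ps where ps: "ps \<noteq> []" "hd ps = (x0,t0)" "last ps = (x',t')"
    and psD: "broken_line_set ps - {(x0,t0)} \<subseteq> D \<union> upper_base D"
    and inj: "inj_on snd (broken_line_set ps)"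
    and below: "\<forall>q\<in>broken_line_set ps. snd q \<le> snd (x0,t0)"
    using sub unfolding subordinate_def by blast
  define L where "L = broken_line_set ps"
  have LS: "L \<subseteq> D \<union> upper_base D" using psD P0 L_def by auto
  have cL: "compact L" "connected L" using bls_props[OF ps(1)] L_def by auto
  have q1L: "(x',t') \<in> L" using last_in_bls[OF ps(1)] ps L_def by simp
  have p0L: "(x0,t0) \<in> L" using hd_in_bls[OF ps(1)] ps L_def by simp
  define f where "f q = u (fst q) (snd q)" for q
  have cf: "continuous_on L f"
  proof -
    have "continuous_on L (\<lambda>(x,t). u x t)" by (rule continuous_on_subset[OF ucont LS])
    then show ?thesis unfolding f_def by (simp add: case_prod_unfold)
  qed
  define St where "St = {q \<in> L. f q = M} \<inter> {q. t' \<le> snd q}"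
  have cSt: "compact St"
  proof -
    have "closed {q \<in> L. f q = M}"
      by (rule continuous_closed_preimage_constant[OF cf compact_imp_closed[OF cL(1)]])
    moreover have "closed {q::(real^'n)\<times>real. t' \<le> snd q}" by (intro closed_Collect_le continuous_intros)
    ultimately have "closed St" unfolding St_def by (rule closed_Int)
    moreover have "St \<subseteq> L" unfolding St_def by auto
    ultimately show ?thesis using cL(1) compact_Int_closed[of L St] by (simp add: Int_absorb1)
  qed
  have p0St: "(x0,t0) \<in> St" unfolding St_def f_def using p0L uP below q1L L_def by force
  obtain qs where qs: "qs \<in> St" and qsmin: "\<forall>q\<in>St. snd qs \<le> snd q"
    using continuous_attains_inf[OF cSt _ continuous_on_snd[OF continuous_on_id]] p0St by blast
  obtain xs ts where qse: "qs = (xs,ts)" by (cases qs)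
  have qsL: "qs \<in> L" and fqs: "f qs = M" and tst: "t' \<le> ts" using qs qse unfolding St_def by auto
  have tst': "t' < ts"
  proof (rule ccontr)
    assume "\<not> t' < ts"
    then have "snd qs = snd (x',t')" using tst qse by simp
    then have "qs = (x',t')" using inj_onD[OF inj _ qsL[unfolded L_def] q1L[unfolded L_def]] by simp
    then show False using fqs ne unfolding f_def by simp
  qed
  have qsS: "(xs,ts) \<in> D \<union> upper_base D" using LS qsL qse by auto
  have uqs: "u xs ts = M" using fqs qse unfolding f_def by simp
  obtain dl where dl: "dl > 0" and dlc: "\<forall>x t. dist x xs < dl \<and> ts - dl < t \<and> t < ts \<longrightarrow> u x t = M"
    using local_cyl[OF oD Sst bds F0 visc ucont uM lam Lam Cc M qsS uqs] by blast
  define ee where "ee = min dl (ts - t')"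
  have ee: "ee > 0" unfolding ee_def using dl tst' by simp
  have "\<exists>q\<in>L. snd q < ts \<and> dist q qs < ee"
  proof (rule ccontr)
    assume nex: "\<not> ?thesis"
    have o1: "open {q::(real^'n)\<times>real. snd q < ts}" by (intro open_Collect_less continuous_intros)
    have o2: "open ({q::(real^'n)\<times>real. ts < snd q} \<union> ball qs ee)"
      by (intro open_Un open_ball open_Collect_less continuous_intros)
    have cov: "L \<subseteq> {q. snd q < ts} \<union> ({q. ts < snd q} \<union> ball qs ee)"
    proof
      fix q assume qL: "q \<in> L"
      show "q \<in> {q. snd q < ts} \<union> ({q. ts < snd q} \<union> ball qs ee)"
      proof (cases "snd q = ts")
        case True
        then have "snd q = snd qs" using qse by simp
        then have "q = qs" using inj_onD[OF inj _ qL[unfolded L_def] qsL[unfolded L_def]] by simp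
        then show ?thesis using ee by simp
      next
        case False then show ?thesis by auto
      qed
    qed
    have dis: "{q. snd q < ts} \<inter> ({q. ts < snd q} \<union> ball qs ee) \<inter> L = {}"
      using nex by (auto simp: dist_commute)
    have "{q. snd q < ts} \<inter> L = {} \<or> ({q. ts < snd q} \<union> ball qs ee) \<inter> L = {}"
      by (rule connectedD[OF cL(2) o1 o2 dis cov])
    moreover have "(x',t') \<in> {q. snd q < ts} \<inter> L" using q1L tst' by simp
    moreover have "qs \<in> ({q. ts < snd q} \<union> ball qs ee) \<inter> L" using qsL ee by simp
    ultimately show False by blast
  qed
  then obtain q where qL: "q \<in> L" and qt: "snd q < ts" and qd: "dist q qs < ee" by blast
  have "dist (fst q) xs \<le> dist q qs" using dist_fst_le[of q qs] qse by simp
  then have q1: "dist (fst q) xs < dl" using qd ee_def by simp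
  have "\<bar>snd q - ts\<bar> \<le> dist q qs" using dist_snd_le[of q qs] qse by (simp add: dist_real_def)
  then have q2: "ts - dl < snd q" "t' < snd q" using qd ee_def by (auto simp: abs_if split: if_splits)
  have "f q = M" unfolding f_def using dlc q1 q2 qt by blast
  then have "q \<in> St" unfolding St_def using qL q2 by simp
  then show False using qsmin qt qse by force
qed


lemma neg_mv: "(- A) *v h = - (A *v h)" for A :: "real^'n^'m"
  by (simp add: vec_eq_iff matrix_vector_mult_def sum_negf)

lemma sym_neg2: "sym_mat A \<Longrightarrow> sym_mat B \<Longrightarrow> sym_mat (- A - B)"
  by (simp add: sym_mat_def transpose_def vec_eq_iff)

lemma struct_neg:
  fixes F :: "real^'n \<Rightarrow> real \<Rightarrow> real \<Rightarrow> real^'n \<Rightarrow> real^'n^'n \<Rightarrow> real"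
  assumes "struct_S F E lam Lam b c"
  shows "struct_S (\<lambda>x t r p X. - F x t (-r) (-p) (-X)) E lam Lam b c"
  unfolding struct_S_def
proof (intro ballI allI impI, clarify)
  fix x t and r s :: real and p q :: "real^'n" and M N :: "real^'n^'n"
  assume xt: "(x,t) \<in> E" and MN: "sym_mat M" "sym_mat N" "psd_mat N"
  have sM': "sym_mat (- M - N)" by (rule sym_neg2[OF MN(1,2)])
  have e1: "- M - N + N = - M" by simp
  have e2: "- (M + N) = - M - N" by simp
  have H: "lam * trace N - b x t * norm (-q - -p) + c x t * (-s - -r) \<le> F x t (-s) (-q) (- M - N + N) - F x t (-r) (-p) (- M - N) \<and>
        F x t (-s) (-q) (- M - N + N) - F x t (-r) (-p) (- M - N) \<le> Lam * trace N + b x t * norm (-q - -p) + c x t * (-s - -r)"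
    using assms xt sM' MN(2,3) unfolding struct_S_def by blast
  have nq: "norm (-q - -p) = norm (p - q)" by (metis minus_diff_eq minus_diff_minus norm_minus_cancel)
  show "lam * trace N - b x t * norm (p - q) + c x t * (r - s) \<le> - F x t (- r) (- p) (- (M + N)) - - F x t (- s) (- q) (- M) \<and>
        - F x t (- r) (- p) (- (M + N)) - - F x t (- s) (- q) (- M) \<le> Lam * trace N + b x t * norm (p - q) + c x t * (r - s)"
    using H unfolding e1 e2 nq by (simp add: algebra_simps)
qed

lemma C21_neg:
  assumes "C21_on U phi Dphi D2phi phit"
  shows "C21_on U (\<lambda>x t. - phi x t) (\<lambda>x t. - Dphi x t) (\<lambda>x t. - D2phi x t) (\<lambda>x t. - phit x t)"
  using assms unfolding C21_on_def case_prod_unfold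
proof (intro conjI ballI; (elim conjE)?)
  fix p assume H: "\<forall>p\<in>U. ((\<lambda>z. phi z (snd p)) has_derivative (\<lambda>h. Dphi (fst p) (snd p) \<bullet> h)) (at (fst p)) \<and>
        ((\<lambda>z. Dphi z (snd p)) has_derivative (\<lambda>h. D2phi (fst p) (snd p) *v h)) (at (fst p)) \<and>
        ((\<lambda>r. phi (fst p) r) has_real_derivative phit (fst p) (snd p)) (at (snd p))" and p: "p \<in> U"
  show "((\<lambda>z. - phi z (snd p)) has_derivative (\<lambda>h. - Dphi (fst p) (snd p) \<bullet> h)) (at (fst p))"
    using has_derivative_minus[OF H[rule_format, OF p, THEN conjunct1]] by simp
  show "((\<lambda>z. - Dphi z (snd p)) has_derivative (\<lambda>h. - D2phi (fst p) (snd p) *v h)) (at (fst p))"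
    using has_derivative_minus[OF H[rule_format, OF p, THEN conjunct2, THEN conjunct1]] by (simp add: neg_mv)
  show "((\<lambda>r. - phi (fst p) r) has_real_derivative - phit (fst p) (snd p)) (at (snd p))"
    using DERIV_minus[OF H[rule_format, OF p, THEN conjunct2, THEN conjunct2]] by simp
qed (auto intro: continuous_intros)

lemma super_to_sub:
  fixes F :: "real^'n \<Rightarrow> real \<Rightarrow> real \<Rightarrow> real^'n \<Rightarrow> real^'n^'n \<Rightarrow> real"
  assumes "visc_super F D u"
  shows "visc_sub (\<lambda>x t r p X. - F x t (-r) (-p) (-X)) D (\<lambda>x t. - u x t)"
  unfolding visc_sub_def
proof (intro allI impI, elim conjE exE)
  fix x0 t0 U phi Dphi D2phi phit r
  assume P: "(x0, t0) \<in> D \<union> upper_base D" and U: "(x0,t0) \<in> U" and C: "C21_on U phi Dphi D2phi phit"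
    and r: "r > 0" and loc: "\<forall>(y, s)\<in>test_nbhd D x0 t0 r. - u y s - phi y s \<le> - u x0 t0 - phi x0 t0"
  have loc': "\<forall>(y, s)\<in>test_nbhd D x0 t0 r. u y s - (- phi y s) \<ge> u x0 t0 - (- phi x0 t0)"
    using loc by auto
  have "F x0 t0 (u x0 t0) (- Dphi x0 t0) (- D2phi x0 t0) - (- phit x0 t0) \<le> 0"
    using assms[unfolded visc_super_def, rule_format, OF P, of U "\<lambda>x t. - phi x t" "\<lambda>x t. - Dphi x t"
        "\<lambda>x t. - D2phi x t" "\<lambda>x t. - phit x t"] U C21_neg[OF C] r loc' by blast
  then show "0 \<le> - F x0 t0 (- (- u x0 t0)) (- Dphi x0 t0) (- D2phi x0 t0) - phit x0 t0" by simp
qed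

theorem theorem3p1:
  fixes D :: "((real^'n) \<times> real) set"
    and F :: "real^'n \<Rightarrow> real \<Rightarrow> real \<Rightarrow> real^'n \<Rightarrow> real^'n^'n \<Rightarrow> real"
    and b c :: "real^'n \<Rightarrow> real \<Rightarrow> real"
    and lam Lam :: real
  assumes "open D" and "connected D" and "D \<noteq> {}"
    and "0 < lam" and "lam \<le> Lam"
    and "struct_S F (D \<union> upper_base D) lam Lam b c"
    and "\<forall>(x,t)\<in>D \<union> upper_base D. b x t \<ge> 0 \<and> c x t \<le> 0"
    and "bounded ((\<lambda>(x,t). b x t) ` D)" and "bounded ((\<lambda>(x,t). c x t) ` D)"
    and "continuous_on D (\<lambda>(x,t). b x t)" and "continuous_on D (\<lambda>(x,t). c x t)"
    and "\<forall>(x,t)\<in>D \<union> upper_base D. F x t 0 0 0 = 0"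
  shows "(\<forall>u M x0 t0.
            continuous_on (D \<union> upper_base D) (\<lambda>(x,t). u x t) \<and> visc_sub F D u \<and>
            (x0,t0) \<in> D \<union> upper_base D \<and> u x0 t0 = M \<and> 0 \<le> M \<and>
            (\<forall>(x,t)\<in>D \<union> upper_base D. u x t \<le> M) \<longrightarrow>
            (\<forall>(x',t')\<in>D. subordinate D (x0,t0) (x',t') \<longrightarrow> u x' t' = M))
       \<and> (\<forall>u M x0 t0.
            continuous_on (D \<union> upper_base D) (\<lambda>(x,t). u x t) \<and> visc_super F D u \<and>
            (x0,t0) \<in> D \<union> upper_base D \<and> u x0 t0 = M \<and> M \<le> 0 \<and>
            (\<forall>(x,t)\<in>D \<union> upper_base D. M \<le> u x t) \<longrightarrow>
            (\<forall>(x',t')\<in>D. subordinate D (x0,t0) (x',t') \<longrightarrow> u x' t' = M))"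
proof -
  note oD = assms(1) and lam = assms(4) and Lam = assms(5) and Sst = assms(6) and sg = assms(7)
  obtain Bb where Bb: "\<forall>v\<in>(\<lambda>(x,t). b x t) ` D. \<bar>v\<bar> \<le> Bb" using assms(8) unfolding bounded_real by blast
  obtain Bc where Bc: "\<forall>v\<in>(\<lambda>(x,t). c x t) ` D. \<bar>v\<bar> \<le> Bc" using assms(9) unfolding bounded_real by blast
  define Cc where "Cc = max Bc 0"
  have Cc: "Cc \<ge> 0" unfolding Cc_def by simp
  have bds: "\<forall>(x,t)\<in>D. b x t \<le> Bb \<and> - c x t \<le> Cc \<and> b x t \<ge> 0 \<and> c x t \<le> 0"
  proof (clarify)
    fix x t assume xt: "(x,t) \<in> D"
    have "\<bar>b x t\<bar> \<le> Bb" using Bb xt by force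
    moreover have "\<bar>c x t\<bar> \<le> Bc" using Bc xt by force
    moreover have "b x t \<ge> 0 \<and> c x t \<le> 0" using sg xt by auto
    ultimately show "b x t \<le> Bb \<and> - c x t \<le> Cc \<and> b x t \<ge> 0 \<and> c x t \<le> 0"
      unfolding Cc_def by auto
  qed
  have F0: "\<forall>(x,t)\<in>D. F x t 0 0 0 = 0" using assms(12) by auto
  show ?thesis
  proof (rule conjI)
    show "\<forall>u M x0 t0.
            continuous_on (D \<union> upper_base D) (\<lambda>(x,t). u x t) \<and> visc_sub F D u \<and>
            (x0,t0) \<in> D \<union> upper_base D \<and> u x0 t0 = M \<and> 0 \<le> M \<and>
            (\<forall>(x,t)\<in>D \<union> upper_base D. u x t \<le> M) \<longrightarrow>
            (\<forall>(x',t')\<in>D. subordinate D (x0,t0) (x',t') \<longrightarrow> u x' t' = M)"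
    proof (intro allI impI)
      fix u M x0 t0
      assume H: "continuous_on (D \<union> upper_base D) (\<lambda>(x,t). u x t) \<and> visc_sub F D u \<and>
            (x0,t0) \<in> D \<union> upper_base D \<and> u x0 t0 = M \<and> 0 \<le> M \<and>
            (\<forall>(x,t)\<in>D \<union> upper_base D. u x t \<le> M)"
      then have uc: "continuous_on (D \<union> upper_base D) (\<lambda>(x,t). u x t)" and vs: "visc_sub F D u"
        and P: "(x0, t0) \<in> D \<union> upper_base D" and uP: "u x0 t0 = M" and M: "0 \<le> M"
        and uM: "\<forall>(x,t)\<in>D \<union> upper_base D. u x t \<le> M" by auto
      show "\<forall>(x',t')\<in>D. subordinate D (x0,t0) (x',t') \<longrightarrow> u x' t' = M"
      proof (rule ballI)
        fix p assume "p \<in> D"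
        obtain x' t' where pe: "p = (x',t')" by (cases p)
        have "subordinate D (x0,t0) (x',t') \<longrightarrow> u x' t' = M"
          using sub_case[OF oD Sst bds F0 vs uc uM lam Lam Cc M P uP] by blast
        then show "case p of (x',t') \<Rightarrow> subordinate D (x0,t0) (x',t') \<longrightarrow> u x' t' = M" using pe by simp
      qed
    qed
  next
    show "\<forall>u M x0 t0.
            continuous_on (D \<union> upper_base D) (\<lambda>(x,t). u x t) \<and> visc_super F D u \<and>
            (x0,t0) \<in> D \<union> upper_base D \<and> u x0 t0 = M \<and> M \<le> 0 \<and>
            (\<forall>(x,t)\<in>D \<union> upper_base D. M \<le> u x t) \<longrightarrow>
            (\<forall>(x',t')\<in>D. subordinate D (x0,t0) (x',t') \<longrightarrow> u x' t' = M)"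
    proof (intro allI impI)
      fix u M x0 t0
      assume H: "continuous_on (D \<union> upper_base D) (\<lambda>(x,t). u x t) \<and> visc_super F D u \<and>
            (x0,t0) \<in> D \<union> upper_base D \<and> u x0 t0 = M \<and> M \<le> 0 \<and>
            (\<forall>(x,t)\<in>D \<union> upper_base D. M \<le> u x t)"
      then have uc: "continuous_on (D \<union> upper_base D) (\<lambda>(x,t). u x t)" and vs: "visc_super F D u"
        and P: "(x0, t0) \<in> D \<union> upper_base D" and uP: "u x0 t0 = M" and M: "M \<le> 0"
        and uM: "\<forall>(x,t)\<in>D \<union> upper_base D. M \<le> u x t" by auto
      define G where "G x t r p X = - F x t (-r) (-p) (-X)" for x t r p X
      define v where "v x t = - u x t" for x t
      have SG: "struct_S G (D \<union> upper_base D) lam Lam b c" unfolding G_def by (rule struct_neg[OF Sst])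
      have G0: "\<forall>(x,t)\<in>D. G x t 0 0 0 = 0" using F0 unfolding G_def by auto
      have vsub: "visc_sub G D v" unfolding G_def v_def by (rule super_to_sub[OF vs])
      have vc: "continuous_on (D \<union> upper_base D) (\<lambda>(x,t). v x t)"
      proof -
        have "continuous_on (D \<union> upper_base D) (\<lambda>p. - (\<lambda>(x,t). u x t) p)" by (intro continuous_intros uc)
        then show ?thesis unfolding v_def by (simp add: case_prod_unfold)
      qed
      have vM: "\<forall>(x,t)\<in>D \<union> upper_base D. v x t \<le> - M" using uM unfolding v_def by auto
      have M': "0 \<le> - M" using M by simp
      have vP: "v x0 t0 = - M" using uP unfolding v_def by simp
      show "\<forall>(x',t')\<in>D. subordinate D (x0,t0) (x',t') \<longrightarrow> u x' t' = M"
      proof (rule ballI)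
        fix p assume "p \<in> D"
        obtain x' t' where pe: "p = (x',t')" by (cases p)
        have "subordinate D (x0,t0) (x',t') \<longrightarrow> v x' t' = - M"
          using sub_case[OF oD SG bds G0 vsub vc vM lam Lam Cc M' P vP] by blast
        then show "case p of (x',t') \<Rightarrow> subordinate D (x0,t0) (x',t') \<longrightarrow> u x' t' = M"
          using pe unfolding v_def by simp
      qed
    qed
  qed
qed

end
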